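(* Let $h$ be a positive integer and $L$ an $h$-modular lattice with zero. For every $x\in\mathcal{A}'$ and every integer $k\geq d(x)$, $x^{(k)}=x^{(d(x))}$.
   Context: $K$ is the lattice consisting of $\varnothing$, $C=\{c\}$, $A_m=\{a_k:k\geq m\}$, $B_n=\{b_k:k\geq n\}$ ($m,n<\omega$), and $C\cup A_m\cup B_n$ with $|m-n|\leq1$, ordered by inclusion; $a_n,b_n,c$ denote $A_n,B_n,C$, so $\mathrm{J}(K)=\{c\}\cup\{a_n\}\cup\{b_n\}$ with $a_0>a_1>\cdots$, $b_0>b_1>\cdots$ and no other comparabilities. $\mathcal{A}$ is the set of antitone maps $x\colon\mathrm{J}(K)\to L$ with finite range. For $x\in\mathcal{A}$, $x(a_\infty)$, $x(b_\infty)$ are the eventual values of the increasing sequences $(x(a_n))$, $(x(b_n))$, and $d(x)$ is the least $d\geq0$ with $x(a_n)=x(a_\infty)$ and $x(b_n)=x(b_\infty)$ for all $n\geq d$. The map $x^{(1)}$ is defined by $x^{(1)}(c)=x(c)\vee(x(a_\infty)\wedge x(b_\infty))$, $x^{(1)}(a_0)=x(a_0)$, $x^{(1)}(b_0)=x(b_0)$, $x^{(1)}(a_{n+1})=x(a_{n+1})\vee(x(b_n)\wedge x(c))$, $x^{(1)}(b_{n+1})=x(b_{n+1})\vee(x(a_n)\wedge x(c))$; $\mathcal{A}$ is closed under $x\mapsto x^{(1)}$, and $x^{(0)}=x$, $x^{(k+1)}=(x^{(k)})^{(1)}$. Put $\ell(x)=\langle x(a_\infty),x(b_\infty),x(c)\rangle$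 and $\mathcal{A}'=\{x\in\mathcal{A}:\ell(x^{(1)})=\ell(x)\}$. $L$ is $h$-modular if $u^{(h+1)}=u^{(h)}$ for all $u\in L^3$, where $\langle x,y,z\rangle^{(1)}=\langle x\vee(y\wedge z),y\vee(x\wedge z),z\vee(x\wedge y)\rangle$. *)

theory Defs
  imports Main
begin

text \<open>Join-irreducibles of K: c, a_n, b_n.\<close>
datatype J = Jc | Ja nat | Jb nat

fun leJ :: "J \<Rightarrow> J \<Rightarrow> bool" where
  "leJ Jc Jc = True"
| "leJ (Ja m) (Ja n) = (n \<le> m)"
| "leJ (Jb m) (Jb n) = (n \<le> m)"
| "leJ _ _ = False"

definition antitoneJ :: "(J \<Rightarrow> 'a::order) \<Rightarrow> bool" where
  "antitoneJ x \<longleftrightarrow> (\<forall>p q. leJ p q \<longrightarrow> x q \<le> x p)"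

definition calA :: "(J \<Rightarrow> 'a::lattice) \<Rightarrow> bool" where
  "calA x \<longleftrightarrow> antitoneJ x \<and> finite (range x)"

definition ainf :: "(J \<Rightarrow> 'a) \<Rightarrow> 'a" where
  "ainf x = (THE v. \<exists>N. \<forall>n\<ge>N. x (Ja n) = v)"

definition binf :: "(J \<Rightarrow> 'a) \<Rightarrow> 'a" where
  "binf x = (THE v. \<exists>N. \<forall>n\<ge>N. x (Jb n) = v)"

definition dx :: "(J \<Rightarrow> 'a) \<Rightarrow> nat" where
  "dx x = (LEAST d. \<forall>n\<ge>d. x (Ja n) = ainf x \<and> x (Jb n) = binf x)"

fun step1 :: "(J \<Rightarrow> 'a::lattice) \<Rightarrow> J \<Rightarrow> 'a" where
  "step1 x Jc = sup (x Jc) (inf (ainf x) (binf x))"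
| "step1 x (Ja 0) = x (Ja 0)"
| "step1 x (Jb 0) = x (Jb 0)"
| "step1 x (Ja (Suc n)) = sup (x (Ja (Suc n))) (inf (x (Jb n)) (x Jc))"
| "step1 x (Jb (Suc n)) = sup (x (Jb (Suc n))) (inf (x (Ja n)) (x Jc))"

definition iterJ :: "nat \<Rightarrow> (J \<Rightarrow> 'a::lattice) \<Rightarrow> J \<Rightarrow> 'a" where
  "iterJ k x = (step1 ^^ k) x"

definition ell :: "(J \<Rightarrow> 'a) \<Rightarrow> 'a \<times> 'a \<times> 'a" where
  "ell x = (ainf x, binf x, x Jc)"

definition calA' :: "(J \<Rightarrow> 'a::lattice) \<Rightarrow> bool" where
  "calA' x \<longleftrightarrow> calA x \<and> ell (step1 x) = ell x"

fun tstep :: "'a::lattice \<times> 'a \<times> 'a \<Rightarrow> 'a \<times> 'a \<times> 'a" where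
  "tstep (x, y, z) = (sup x (inf y z), sup y (inf x z), sup z (inf x y))"

definition hmodular :: "'a::lattice itself \<Rightarrow> nat \<Rightarrow> bool" where
  "hmodular _ h \<longleftrightarrow> (\<forall>u::'a \<times> 'a \<times> 'a. (tstep ^^ (h + 1)) u = (tstep ^^ h) u)"

end

theory Submission
  imports Defs
begin

lemma mono_finite_evconst:
  fixes f :: "nat \<Rightarrow> 'a::order"
  assumes m: "\<And>i j. i \<le> j \<Longrightarrow> f i \<le> f j" and fin: "finite (range f)"
  shows "\<exists>N. \<forall>n\<ge>N. f n = f N"
proof -
  define M where "M = Max (inv f ` range f)"
  have fM: "finite (inv f ` range f)" using fin by simp
  show ?thesis
  proof (intro exI allI impI)
    fix n assume "M \<le> n"
    define i where "i = inv f (f n)"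
    have fi: "f i = f n" unfolding i_def by (meson f_inv_into_f rangeI)
    have "i \<le> M" unfolding M_def i_def using fM by (intro Max_ge) auto
    then have "f i \<le> f M" by (rule m)
    moreover have "f M \<le> f n" using \<open>M \<le> n\<close> by (rule m)
    ultimately show "f n = f M" using fi by (metis order.antisym)
  qed
qed

lemma the_ev:
  fixes f :: "nat \<Rightarrow> 'a"
  assumes "\<forall>n\<ge>N. f n = v"
  shows "(THE v. \<exists>N. \<forall>n\<ge>N. f n = v) = v"
proof (rule the_equality)
  show "\<exists>N. \<forall>n\<ge>N. f n = v" using assms by blast
next
  fix w assume "\<exists>N. \<forall>n\<ge>N. f n = w"
  then obtain N' where "\<forall>n\<ge>N'. f n = w" by blast
  then have "f (max N N') = w" by (meson max.cobounded2)
  moreover have "f (max N N') = v" using assms by (meson max.cobounded1)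
  ultimately show "w = v" by simp
qed

lemma ainf_ev: "\<forall>n\<ge>N. x (Ja n) = v \<Longrightarrow> ainf x = v"
  unfolding ainf_def by (rule the_ev[where f="\<lambda>n. x (Ja n)"])

lemma binf_ev: "\<forall>n\<ge>N. x (Jb n) = v \<Longrightarrow> binf x = v"
  unfolding binf_def by (rule the_ev[where f="\<lambda>n. x (Jb n)"])

lemma iter_Suc: "iterJ (Suc k) x = step1 (iterJ k x)"
  unfolding iterJ_def by simp

lemma iter_0: "iterJ 0 x = x"
  unfolding iterJ_def by simp

theorem corollary5p6:
  fixes h k :: nat and x :: "J \<Rightarrow> 'a::bounded_lattice_bot"
  assumes "0 < h"
    and "hmodular TYPE('a) h"
    and "calA' x"
    and "dx x \<le> k"
  shows "iterJ k x = iterJ (dx x) x"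
proof -
  have cA: "calA x" and ell: "ell (step1 x) = ell x" using assms(3) unfolding calA'_def by auto
  have anti: "antitoneJ x" and fin: "finite (range x)" using cA unfolding calA_def by auto
  have ma: "x (Ja i) \<le> x (Ja j)" if "i \<le> j" for i j
  proof -
    have "leJ (Ja j) (Ja i)" using that by simp
    then show ?thesis using anti unfolding antitoneJ_def by blast
  qed
  have mb: "x (Jb i) \<le> x (Jb j)" if "i \<le> j" for i j
  proof -
    have "leJ (Jb j) (Jb i)" using that by simp
    then show ?thesis using anti unfolding antitoneJ_def by blast
  qed
  have fa: "finite (range (\<lambda>n. x (Ja n)))"
    by (rule finite_subset[OF _ fin]) auto
  have fb: "finite (range (\<lambda>n. x (Jb n)))"
    by (rule finite_subset[OF _ fin]) auto
  obtain Na where Na: "\<forall>n\<ge>Na. x (Ja n) = x (Ja Na)"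
    using mono_finite_evconst[OF ma fa] by blast
  obtain Nb where Nb: "\<forall>n\<ge>Nb. x (Jb n) = x (Jb Nb)"
    using mono_finite_evconst[OF mb fb] by blast
  define \<alpha> where "\<alpha> = ainf x"
  define \<beta> where "\<beta> = binf x"
  define \<gamma> where "\<gamma> = x Jc"
  have aN: "ainf x = x (Ja Na)" by (rule ainf_ev[OF Na])
  have bN: "binf x = x (Jb Nb)" by (rule binf_ev[OF Nb])
  have ex: "\<exists>d. \<forall>n\<ge>d. x (Ja n) = ainf x \<and> x (Jb n) = binf x"
  proof (intro exI allI impI)
    fix n assume "max Na Nb \<le> n"
    then have "Na \<le> n" "Nb \<le> n" by auto
    then show "x (Ja n) = ainf x \<and> x (Jb n) = binf x"
      using Na Nb aN bN by metis
  qed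
  define d where "d = dx x"
  have H1: "\<forall>n\<ge>d. x (Ja n) = \<alpha> \<and> x (Jb n) = \<beta>"
    unfolding d_def dx_def \<alpha>_def \<beta>_def by (rule LeastI_ex[OF ex])
  have "\<forall>n\<ge>d. step1 x (Ja (Suc n)) = sup \<alpha> (inf \<beta> \<gamma>)"
    using H1 \<gamma>_def by simp
  then have "\<forall>n\<ge>Suc d. step1 x (Ja n) = sup \<alpha> (inf \<beta> \<gamma>)"
    by (metis Suc_le_D Suc_le_mono)
  then have "ainf (step1 x) = sup \<alpha> (inf \<beta> \<gamma>)" by (rule ainf_ev)
  then have H2a: "inf \<beta> \<gamma> \<le> \<alpha>" using ell unfolding ell_def \<alpha>_def
    by (metis prod.inject sup.orderI sup_commute)
  have "\<forall>n\<ge>d. step1 x (Jb (Suc n)) = sup \<beta> (inf \<alpha> \<gamma>)"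
    using H1 \<gamma>_def by simp
  then have "\<forall>n\<ge>Suc d. step1 x (Jb n) = sup \<beta> (inf \<alpha> \<gamma>)"
    by (metis Suc_le_D Suc_le_mono)
  then have "binf (step1 x) = sup \<beta> (inf \<alpha> \<gamma>)" by (rule binf_ev)
  then have H2b: "inf \<alpha> \<gamma> \<le> \<beta>" using ell unfolding ell_def \<beta>_def
    by (metis prod.inject sup.orderI sup_commute)
  have "step1 x Jc = sup \<gamma> (inf \<alpha> \<beta>)" unfolding \<alpha>_def \<beta>_def \<gamma>_def by simp
  then have H2c: "inf \<alpha> \<beta> \<le> \<gamma>" using ell unfolding ell_def \<gamma>_def
    by (metis prod.inject sup.orderI sup_commute)
  define y where "y k = iterJ k x" for k
  have yS: "y (Suc k) = step1 (y k)" for k unfolding y_def by (rule iter_Suc)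
  have y0: "y 0 = x" unfolding y_def by (rule iter_0)
  have le_a: "\<And>n. x (Ja n) \<le> \<alpha>"
    using H1 ma by (metis nat_le_linear order.refl)
  have le_b: "\<And>n. x (Jb n) \<le> \<beta>"
    using H1 mb by (metis nat_le_linear order.refl)
  have inv: "y k Jc = \<gamma> \<and> (\<forall>n. y k (Ja n) \<le> \<alpha> \<and> y k (Jb n) \<le> \<beta>)
       \<and> (\<forall>n\<ge>d. y k (Ja n) = \<alpha> \<and> y k (Jb n) = \<beta>)" for k
  proof (induction k)
    case 0
    then show ?case using y0 \<gamma>_def le_a le_b H1 by simp
  next
    case (Suc k)
    then have c: "y k Jc = \<gamma>" and le: "\<And>n. y k (Ja n) \<le> \<alpha> \<and> y k (Jb n) \<le> \<beta>"
      and eq: "\<And>n. n \<ge> d \<Longrightarrow> y k (Ja n) = \<alpha> \<and> y k (Jb n) = \<beta>" by auto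
    have ai: "ainf (y k) = \<alpha>" using eq by (intro ainf_ev[of d]) auto
    have bi: "binf (y k) = \<beta>" using eq by (intro binf_ev[of d]) auto
    have c': "y (Suc k) Jc = \<gamma>" using yS c ai bi H2c by (simp add: sup_absorb1)
    have la: "y (Suc k) (Ja n) \<le> \<alpha>" for n
    proof (cases n)
      case 0 then show ?thesis using yS le by simp
    next
      case (Suc m)
      have "inf (y k (Jb m)) \<gamma> \<le> inf \<beta> \<gamma>" using le inf_mono by blast
      then have "inf (y k (Jb m)) \<gamma> \<le> \<alpha>" using H2a by (rule order_trans)
      then show ?thesis using Suc yS le c by simp
    qed
    have lb: "y (Suc k) (Jb n) \<le> \<beta>" for n
    proof (cases n)
      case 0 then show ?thesis using yS le by simp
    next
      case (Suc m)
      have "inf (y k (Ja m)) \<gamma> \<le> inf \<alpha> \<gamma>" using le inf_mono by blast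
      then have "inf (y k (Ja m)) \<gamma> \<le> \<beta>" using H2b by (rule order_trans)
      then show ?thesis using Suc yS le c by simp
    qed
    have ea: "y (Suc k) (Ja n) = \<alpha> \<and> y (Suc k) (Jb n) = \<beta>" if "n \<ge> d" for n
    proof -
      have "y k (Ja n) \<le> y (Suc k) (Ja n)" "y k (Jb n) \<le> y (Suc k) (Jb n)"
        using yS by (cases n; simp)+
      then show ?thesis using eq[OF that] la lb by (metis order.antisym)
    qed
    show ?case using c' la lb ea by blast
  qed
  have P: "\<forall>k\<ge>n. y (Suc k) (Ja n) = y k (Ja n) \<and> y (Suc k) (Jb n) = y k (Jb n)" for n
  proof (induction n)
    case 0 then show ?case using yS by simp
  next
    case (Suc n)
    show ?case
    proof (intro allI impI)
      fix k assume "Suc n \<le> k"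
      then obtain k' where k: "k = Suc k'" and "n \<le> k'" by (metis Suc_le_D Suc_le_mono)
      then have ih: "y k (Ja n) = y k' (Ja n)" "y k (Jb n) = y k' (Jb n)"
        using Suc.IH by auto
      have c: "y k Jc = \<gamma>" "y k' Jc = \<gamma>" using inv by auto
      show "y (Suc k) (Ja (Suc n)) = y k (Ja (Suc n)) \<and> y (Suc k) (Jb (Suc n)) = y k (Jb (Suc n))"
        using yS[of k] yS[of k'] k ih c by (simp add: sup_assoc)
    qed
  qed
  have stab: "y (Suc k) = y k" if "d \<le> k" for k
  proof
    fix j show "y (Suc k) j = y k j"
    proof (cases j)
      case Jc then show ?thesis using inv by simp
    next
      case (Ja n) then show ?thesis
        using inv[of k] inv[of "Suc k"] P[of n] that by (cases "d \<le> n") auto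
    next
      case (Jb n) then show ?thesis
        using inv[of k] inv[of "Suc k"] P[of n] that by (cases "d \<le> n") auto
    qed
  qed
  have yk: "y k = y d" if "d \<le> k" for k
    using that
  proof (induction k rule: dec_induct)
    case base then show ?case by (rule refl)
  next
    case (step m)
    have "y (Suc m) = y m" by (rule stab[OF step(1)])
    then show ?case using step(3) by (rule trans)
  qed
  have "d \<le> k" unfolding d_def by (rule assms(4))
  then have "y k = y d" by (rule yk)
  then show ?thesis unfolding y_def d_def .
qed

end
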